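(* Let $G$ be a finite group with identity $e$ and $H$ a normal subgroup of $G$. Then the extended subgroup sum graph $\Gamma^+_{G,H}$ admits a perfect code if and only if either $H\in\{\{e\},G\}$ or $G^2\subseteq H$, where $G^2=\{g^2:g\in G\}$.
   Context: For a normal subgroup $H$ of a finite group $G$, the extended subgroup sum graph $\Gamma^+_{G,H}$ is the simple undirected graph with vertex set $G$ in which distinct vertices $x,y$ are adjacent if and only if $xy\in H$. A perfect code in a graph is a set $C$ of vertices that is independent and such that every vertex not in $C$ is adjacent to exactly one vertex of $C$. *)

theory Defs
  imports "HOL-Algebra.Coset"
begin

definition ess_adj :: "('a, 'b) monoid_scheme \<Rightarrow> 'a set \<Rightarrow> 'a \<Rightarrow> 'a \<Rightarrow> bool" where
  "ess_adj G H x y \<longleftrightarrow> x \<in> carrier G \<and> y \<in> carrier G \<and> x \<noteq> y \<and> x \<otimes>\<^bsub>G\<^esub> y \<in> H"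

definition perfect_code :: "'a set \<Rightarrow> ('a \<Rightarrow> 'a \<Rightarrow> bool) \<Rightarrow> 'a set \<Rightarrow> bool" where
  "perfect_code V E C \<longleftrightarrow> C \<subseteq> V \<and> (\<forall>x\<in>C. \<forall>y\<in>C. \<not> E x y)
     \<and> (\<forall>v\<in>V - C. \<exists>!c. c \<in> C \<and> E v c)"

definition has_perfect_code :: "'a set \<Rightarrow> ('a \<Rightarrow> 'a \<Rightarrow> bool) \<Rightarrow> bool" where
  "has_perfect_code V E \<longleftrightarrow> (\<exists>C. perfect_code V E C)"

end

theory Submission
  imports Defs
begin

lemma clique_pc:
  assumes sym: "\<And>x y. E x y \<Longrightarrow> E y x"
    and irr: "\<And>x y. E x y \<Longrightarrow> x \<noteq> y \<and> x \<in> V \<and> y \<in> V"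
    and tr: "\<And>x y z. E x y \<Longrightarrow> E y z \<Longrightarrow> x \<noteq> z \<Longrightarrow> E x z"
  shows "has_perfect_code V E"
proof -
  define R where "R = (\<lambda>x y. x = y \<or> E x y)"
  have Rs: "R x y \<Longrightarrow> R y x" for x y using sym unfolding R_def by blast
  have Rt: "R x y \<Longrightarrow> R y z \<Longrightarrow> R x z" for x y z using tr unfolding R_def by blast
  define r where "r x = (SOME y. R x y)" for x
  have rR: "R x (r x)" for x unfolding r_def by (rule someI[of _ x]) (simp add: R_def)
  have req: "R x y \<Longrightarrow> r x = r y" for x y
  proof -
    assume "R x y"
    hence "R x = R y" using Rs Rt by (intro ext) (meson)
    thus "r x = r y" unfolding r_def by simp
  qed
  define C where "C = r ` V"
  have "perfect_code V E C"
    unfolding perfect_code_def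
  proof (intro conjI ballI)
    show "C \<subseteq> V" unfolding C_def
    proof
      fix z assume "z \<in> r ` V"
      then obtain x where "x \<in> V" "z = r x" by blast
      moreover have "x = r x \<or> E x (r x)" using rR[of x] unfolding R_def .
      ultimately show "z \<in> V" using irr[of x "r x"] by auto
    qed
  next
    fix x y assume "x \<in> C" "y \<in> C"
    then obtain a b where ab: "x = r a" "y = r b" unfolding C_def by blast
    show "\<not> E x y"
    proof
      assume e: "E x y"
      hence rab: "R (r a) (r b)" unfolding ab R_def by simp
      have "R a b" using Rt[OF Rt[OF rR[of a] rab] Rs[OF rR[of b]]] .
      hence "x = y" using req ab by simp
      thus False using irr e by blast
    qed
  next
    fix v assume v: "v \<in> V - C"
    hence "r v \<noteq> v" unfolding C_def by force
    hence e: "E v (r v)" using rR[of v] unfolding R_def by auto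
    show "\<exists>!c. c \<in> C \<and> E v c"
    proof (rule ex1I[of _ "r v"])
      show "r v \<in> C \<and> E v (r v)" using v e unfolding C_def by blast
    next
      fix c assume c: "c \<in> C \<and> E v c"
      then obtain a where a: "c = r a" unfolding C_def by blast
      have "R v (r a)" using c unfolding a R_def by simp
      hence "R a v" using Rt[OF rR[of a] Rs] by blast
      thus "c = r v" using req a by simp
    qed
  qed
  thus ?thesis unfolding has_perfect_code_def by blast
qed

lemma (in normal) ess_sym:
  assumes "x \<in> carrier G" "y \<in> carrier G" "x \<otimes> y \<in> H"
  shows "y \<otimes> x \<in> H"
proof -
  have "inv x \<otimes> (x \<otimes> y) \<otimes> x \<in> H" using inv_op_closed1 assms by blast
  thus ?thesis using assms by (simp add: m_assoc[symmetric])
qed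


lemma (in group) cancel_simps[simp]:
  "x \<in> carrier G \<Longrightarrow> y \<in> carrier G \<Longrightarrow> x \<otimes> (inv x \<otimes> y) = y"
  "x \<in> carrier G \<Longrightarrow> y \<in> carrier G \<Longrightarrow> inv x \<otimes> (x \<otimes> y) = y"
  by (simp_all add: m_assoc[symmetric])

lemma (in normal) sq_trans:
  assumes sq: "\<And>g. g \<in> carrier G \<Longrightarrow> g \<otimes> g \<in> H"
    and c: "x \<in> carrier G" "y \<in> carrier G" "z \<in> carrier G"
    and h: "x \<otimes> y \<in> H" "y \<otimes> z \<in> H"
  shows "x \<otimes> z \<in> H"
proof -
  have "(x \<otimes> y) \<otimes> inv (y \<otimes> y) \<otimes> (y \<otimes> z) \<in> H"
    using h sq[OF c(2)] by (simp add: m_inv_closed m_closed)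
  moreover have "(x \<otimes> y) \<otimes> inv (y \<otimes> y) \<otimes> (y \<otimes> z) = x \<otimes> z"
    using c by (simp add: inv_mult_group m_assoc)
  ultimately show ?thesis by simp
qed

lemma (in normal) fwd:
  assumes g: "g \<in> carrier G" "g \<otimes> g \<notin> H"
    and hH: "h \<in> H" "h \<noteq> \<one>"
    and pc: "perfect_code (carrier G) (ess_adj G H) C"
  shows False
proof -
  define P where "P x = (\<exists>k\<in>H. x = g \<otimes> k)" for x
  define Q where "Q x = (\<exists>k\<in>H. x = inv g \<otimes> k)" for x
  have Hc: "k \<in> H \<Longrightarrow> k \<in> carrier G" for k by (rule mem_carrier)
  have Pc: "P x \<Longrightarrow> x \<in> carrier G" for x using g Hc unfolding P_def by auto
  have Qc: "Q x \<Longrightarrow> x \<in> carrier G" for x using g Hc unfolding Q_def by auto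
  have PQ: "P x \<Longrightarrow> Q y \<Longrightarrow> x \<otimes> y \<in> H" for x y
  proof -
    assume "P x" "Q y"
    then obtain k1 k2 where k: "k1 \<in> H" "k2 \<in> H" "x = g \<otimes> k1" "y = inv g \<otimes> k2"
      unfolding P_def Q_def by blast
    have "(g \<otimes> k1 \<otimes> inv g) \<otimes> k2 \<in> H" using inv_op_closed2[OF g(1) k(1)] k(2) by simp
    thus ?thesis using k g Hc by (simp add: m_assoc)
  qed
  have QP: "Q y \<Longrightarrow> P x \<Longrightarrow> y \<otimes> x \<in> H" for x y
    using PQ ess_sym Pc Qc by blast
  have Pn: "P x \<Longrightarrow> x \<in> carrier G \<Longrightarrow> z \<in> carrier G \<Longrightarrow> x \<otimes> z \<in> H \<Longrightarrow> Q z" for x z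
  proof -
    assume a: "P x" "x \<in> carrier G" "z \<in> carrier G" "x \<otimes> z \<in> H"
    then obtain k1 where k: "k1 \<in> H" "x = g \<otimes> k1" unfolding P_def by blast
    define k where "k = x \<otimes> z"
    have z: "z = inv x \<otimes> k" using a unfolding k_def by (simp add: m_assoc[symmetric])
    have w: "(g \<otimes> inv k1 \<otimes> inv g) \<otimes> k \<in> H"
      using inv_op_closed2[OF g(1) m_inv_closed[OF k(1)]] a(4) unfolding k_def by simp
    have "z = inv g \<otimes> ((g \<otimes> inv k1 \<otimes> inv g) \<otimes> k)"
      using z k g Hc a unfolding k_def by (simp add: inv_mult_group m_assoc)
    thus "Q z" using w unfolding Q_def by blast
  qed
  have Qn: "Q y \<Longrightarrow> y \<in> carrier G \<Longrightarrow> z \<in> carrier G \<Longrightarrow> y \<otimes> z \<in> H \<Longrightarrow> P z" for y z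
  proof -
    assume a: "Q y" "y \<in> carrier G" "z \<in> carrier G" "y \<otimes> z \<in> H"
    then obtain k1 where k: "k1 \<in> H" "y = inv g \<otimes> k1" unfolding Q_def by blast
    define k where "k = y \<otimes> z"
    have z: "z = inv y \<otimes> k" using a unfolding k_def by (simp add: m_assoc[symmetric])
    have w: "(inv g \<otimes> inv k1 \<otimes> g) \<otimes> k \<in> H"
      using inv_op_closed1[OF g(1) m_inv_closed[OF k(1)]] a(4) unfolding k_def by simp
    have "z = g \<otimes> ((inv g \<otimes> inv k1 \<otimes> g) \<otimes> k)"
      using z k g Hc a unfolding k_def by (simp add: inv_mult_group m_assoc)
    thus "P z" using w unfolding P_def by blast
  qed
  have PnQ: "P x \<Longrightarrow> Q x \<Longrightarrow> False" for x
  proof -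
    assume "P x" "Q x"
    then obtain k1 k2 where k: "k1 \<in> H" "k2 \<in> H" "x = g \<otimes> k1" "x = inv g \<otimes> k2"
      unfolding P_def Q_def by blast
    have "g \<otimes> g = k2 \<otimes> inv k1"
    proof -
      have "g \<otimes> (g \<otimes> k1) = g \<otimes> (inv g \<otimes> k2)" using k by simp
      hence "g \<otimes> g \<otimes> k1 = k2" using g Hc k by (simp add: m_assoc[symmetric])
      thus ?thesis using g Hc k by (metis m_closed inv_solve_right)
    qed
    thus False using g k by simp
  qed
  have E: "P x \<Longrightarrow> Q y \<Longrightarrow> ess_adj G H x y \<and> ess_adj G H y x" for x y
    unfolding ess_adj_def using PQ QP Pc Qc PnQ by blast
  have EP: "P x \<Longrightarrow> ess_adj G H x z \<Longrightarrow> Q z" for x z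
    unfolding ess_adj_def using Pn by blast
  have EQ: "Q x \<Longrightarrow> ess_adj G H x z \<Longrightarrow> P z" for x z
    unfolding ess_adj_def using Qn by blast
  have hc: "h \<in> carrier G" using Hc hH by blast
  have P1: "P g" "P (g \<otimes> h)" unfolding P_def using hH g by (auto intro!: bexI[of _ \<one>] simp: one_closed)
  have Q1: "Q (inv g)" "Q (inv g \<otimes> h)" unfolding Q_def using hH g by (auto intro!: bexI[of _ \<one>] simp: one_closed)
  have Pd: "g \<noteq> g \<otimes> h"
  proof
    assume "g = g \<otimes> h"
    hence "inv g \<otimes> g = inv g \<otimes> (g \<otimes> h)" by simp
    thus False using hH hc g by simp
  qed
  have Qd: "inv g \<noteq> inv g \<otimes> h"
  proof
    assume "inv g = inv g \<otimes> h"
    hence "g \<otimes> inv g = g \<otimes> (inv g \<otimes> h)" by simp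
    thus False using hH hc g by simp
  qed
  have Ci: "\<And>x y. x \<in> C \<Longrightarrow> y \<in> C \<Longrightarrow> \<not> ess_adj G H x y"
    and Cu: "\<And>v. v \<in> carrier G \<Longrightarrow> v \<notin> C \<Longrightarrow> \<exists>!c. c \<in> C \<and> ess_adj G H v c"
    using pc unfolding perfect_code_def by auto
  show False
  proof (cases "\<exists>a\<in>C. P a")
    case True
    then obtain a where a: "a \<in> C" "P a" by blast
    have noQ: "y \<in> C \<Longrightarrow> Q y \<Longrightarrow> False" for y using Ci[OF a(1)] E[OF a(2)] by blast
    obtain a' where a': "P a'" "a' \<noteq> a" using P1 Pd by metis
    have "a' \<notin> C"
    proof
      assume "a' \<in> C"
      have "inv g \<notin> C" using noQ Q1 by blast
      then obtain c where "\<forall>c'. c' \<in> C \<and> ess_adj G H (inv g) c' \<longrightarrow> c' = c"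
        using Cu[of "inv g"] g by auto
      moreover have "ess_adj G H (inv g) a" "ess_adj G H (inv g) a'" using E a a' Q1 by blast+
      ultimately show False using a a' \<open>a' \<in> C\<close> by blast
    qed
    then obtain c where "c \<in> C" "ess_adj G H a' c" using Cu[of a'] Pc a' by blast
    thus False using noQ EP a' by blast
  next
    case False
    hence "g \<notin> C" using P1 by blast
    then obtain c where c: "c \<in> C" "ess_adj G H g c"
      and cu: "\<forall>c'. c' \<in> C \<and> ess_adj G H g c' \<longrightarrow> c' = c" using Cu[of g] g by metis
    have Qc': "Q c" using EP P1 c by blast
    obtain b where b: "Q b" "b \<noteq> c" using Q1 Qd by metis
    have "b \<notin> C" using cu b E P1 by blast
    then obtain c' where "c' \<in> C" "ess_adj G H b c'" using Cu[of b] Qc b by blast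
    thus False using False EQ b by blast
  qed
qed

theorem theorem6p1:
  fixes G :: "('a, 'b) monoid_scheme" and H :: "'a set"
  assumes "group G" and "finite (carrier G)" and "H \<lhd> G"
  shows "has_perfect_code (carrier G) (ess_adj G H)
         \<longleftrightarrow> (H = {\<one>\<^bsub>G\<^esub>} \<or> H = carrier G
              \<or> {g \<otimes>\<^bsub>G\<^esub> g | g. g \<in> carrier G} \<subseteq> H)"
proof -
  interpret N: normal H G using assms(3) .
  have sym: "\<And>x y. ess_adj G H x y \<Longrightarrow> ess_adj G H y x"
    unfolding ess_adj_def using N.ess_sym by blast
  have irr: "\<And>x y. ess_adj G H x y \<Longrightarrow> x \<noteq> y \<and> x \<in> carrier G \<and> y \<in> carrier G"
    unfolding ess_adj_def by blast
  show ?thesis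
  proof
    assume "has_perfect_code (carrier G) (ess_adj G H)"
    then obtain C where C: "perfect_code (carrier G) (ess_adj G H) C"
      unfolding has_perfect_code_def by blast
    show "H = {\<one>\<^bsub>G\<^esub>} \<or> H = carrier G \<or> {g \<otimes>\<^bsub>G\<^esub> g | g. g \<in> carrier G} \<subseteq> H"
    proof (rule ccontr)
      assume n: "\<not> ?thesis"
      then obtain g where g: "g \<in> carrier G" "g \<otimes>\<^bsub>G\<^esub> g \<notin> H" by blast
      have "H \<noteq> {\<one>\<^bsub>G\<^esub>}" using n by blast
      hence "\<exists>h\<in>H. h \<noteq> \<one>\<^bsub>G\<^esub>" using subgroup.one_closed[OF N.subgroup_axioms] by blast
      then obtain h where "h \<in> H" "h \<noteq> \<one>\<^bsub>G\<^esub>" by blast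
      thus False using N.fwd[OF g _ _ C] by blast
    qed
  next
    assume r: "H = {\<one>\<^bsub>G\<^esub>} \<or> H = carrier G \<or> {g \<otimes>\<^bsub>G\<^esub> g | g. g \<in> carrier G} \<subseteq> H"
    have sqc: "H = {\<one>\<^bsub>G\<^esub>} \<or> (\<forall>g\<in>carrier G. g \<otimes>\<^bsub>G\<^esub> g \<in> H)"
      using r by blast
    show "has_perfect_code (carrier G) (ess_adj G H)"
    proof (rule clique_pc[OF sym irr])
      fix x y z assume e: "ess_adj G H x y" "ess_adj G H y z" "x \<noteq> z"
      show "ess_adj G H x z"
        using sqc
      proof
        assume H1: "H = {\<one>\<^bsub>G\<^esub>}"
        have c: "x \<in> carrier G" "y \<in> carrier G" "z \<in> carrier G"
          "x \<otimes>\<^bsub>G\<^esub> y = \<one>\<^bsub>G\<^esub>" "y \<otimes>\<^bsub>G\<^esub> z = \<one>\<^bsub>G\<^esub>"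
          using e H1 unfolding ess_adj_def by auto
        have "inv\<^bsub>G\<^esub> y = x" using c by (auto intro: N.inv_equality)
        moreover have "z = inv\<^bsub>G\<^esub> y \<otimes>\<^bsub>G\<^esub> (y \<otimes>\<^bsub>G\<^esub> z)"
          using N.cancel_simps(2)[of y z] c by simp
        hence "inv\<^bsub>G\<^esub> y = z" using c(5) c(2) by simp
        ultimately show ?thesis using e by simp
      next
        assume "\<forall>g\<in>carrier G. g \<otimes>\<^bsub>G\<^esub> g \<in> H"
        thus ?thesis using e N.sq_trans unfolding ess_adj_def by blast
      qed
    qed
  qed
qed

end
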